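(* There is a nonnegative smooth function $f$ on $\mathbb{R}^d$ such that $f(x)=|x|^2$ if $|x|\le1$, $f(x)=2$ if $|x|\ge2$, and $|\nabla f(x)|+|\nabla^2f(x)|\le C_1\mathbf{1}_{\{|x|\le2\}}$ for some constant $C_1>0$; and such that for any constant $C_2>0$ there exists a constant $C_3>0$ such that for all $\delta>0$, $r\in[0,1]$ and $x,y\in\mathbb{R}^d$ with $|y|\le C_2\big((|x|+\delta)\wedge1\big)$, $$|y||\nabla f(x+ry)|\le C_3(f(x)+\delta),\qquad|y|^2|\nabla^2f(x+ry)|\le C_3(f(x)+\delta^2).$$ *)

theory Defs
  imports "HOL-Analysis.Analysis"
begin

definition pderiv_dir :: "'a::euclidean_space \<Rightarrow> ('a \<Rightarrow> real) \<Rightarrow> 'a \<Rightarrow> real" where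
  "pderiv_dir v g x = frechet_derivative g (at x) v"

fun diter :: "'a::euclidean_space list \<Rightarrow> ('a \<Rightarrow> real) \<Rightarrow> 'a \<Rightarrow> real" where
  "diter [] g = g"
| "diter (v # vs) g = pderiv_dir v (diter vs g)"

definition smooth_fun :: "('a::euclidean_space \<Rightarrow> real) \<Rightarrow> bool" where
  "smooth_fun g \<longleftrightarrow> (\<forall>vs. diter vs g differentiable_on UNIV)"

definition grad_norm :: "('a::euclidean_space \<Rightarrow> real) \<Rightarrow> 'a \<Rightarrow> real" where
  "grad_norm g x = sqrt (\<Sum>b\<in>Basis. (pderiv_dir b g x)\<^sup>2)"

definition hess_norm :: "('a::euclidean_space \<Rightarrow> real) \<Rightarrow> 'a \<Rightarrow> real" where
  "hess_norm g x = sqrt (\<Sum>b\<in>Basis. \<Sum>c\<in>Basis. (pderiv_dir b (pderiv_dir c g) x)\<^sup>2)"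

end

theory Submission
  imports Defs
begin
definition a :: "nat \<Rightarrow> real \<Rightarrow> real" where
  "a k t = (if 0 < t then exp (- inverse t) / t ^ k else 0)"

lemma a_nonneg: "a k t \<ge> 0" by (simp add: a_def)
lemma a_pos: "t > 0 \<Longrightarrow> a k t > 0" by (simp add: a_def)

lemma a_lim: "((\<lambda>y. a k y / y) \<longlongrightarrow> 0) (at (0::real))"
proof (rule filterlim_split_at)
  have "eventually (\<lambda>y. a k y / y = 0) (at_left (0::real))"
    unfolding eventually_at_filter by (auto simp: a_def)
  then show "((\<lambda>y. a k y / y) \<longlongrightarrow> 0) (at_left 0)"
    by (rule tendsto_eventually)
next
  have "((\<lambda>x::real. x ^ Suc k / exp x) \<longlongrightarrow> 0) at_top" by (rule tendsto_power_div_exp_0[of "Suc k"])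
  moreover have "eventually (\<lambda>x::real. x ^ Suc k / exp x = a k (inverse x) / inverse x) at_top"
    using eventually_gt_at_top[of 0]
    apply eventually_elim
    apply (simp add: a_def exp_minus power_inverse divide_inverse)
    done
  ultimately have "((\<lambda>x. a k (inverse x) / inverse x) \<longlongrightarrow> 0) at_top"
    by (rule Lim_transform_eventually)
  then show "((\<lambda>y. a k y / y) \<longlongrightarrow> 0) (at_right 0)"
    unfolding filterlim_at_right_to_top .
qed


lemma a_deriv: "(a k has_real_derivative (a (k+2) t - real k * a (k+1) t)) (at t)"
proof -
  consider "t > 0" | "t < 0" | "t = 0" by linarith
  then show ?thesis
  proof cases
    case 1
    have "((\<lambda>t. exp (- inverse t) / t ^ k) has_real_derivative (a (k+2) t - real k * a (k+1) t)) (at t)"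
      using 1
      apply (intro derivative_eq_intros refl)
      apply (auto simp: a_def)
      apply (cases k)
       apply (auto simp: field_simps)
      done
    then show ?thesis
      by (rule has_field_derivative_transform_within_open[where S="{0<..}"]) (use 1 in \<open>auto simp: a_def\<close>)
  next
    case 2
    have "((\<lambda>t. 0) has_real_derivative (a (k+2) t - real k * a (k+1) t)) (at t)" using 2 by (simp add: a_def)
    then show ?thesis
      by (rule has_field_derivative_transform_within_open[where S="{..<0}"]) (use 2 in \<open>auto simp: a_def\<close>)
  next
    case 3
    show ?thesis using a_lim[of k] 3 unfolding has_field_derivative_iff by (simp add: a_def)
  qed
qed

inductive_set C1 :: "(real \<Rightarrow> real) set" where
  c1_const: "(\<lambda>t. c) \<in> C1"
| c1_id: "(\<lambda>t. t) \<in> C1"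
| c1_a1: "(\<lambda>t. a k (t - 1)) \<in> C1"
| c1_a2: "(\<lambda>t. a k (4 - t)) \<in> C1"
| c1_inv: "(\<lambda>t. inverse (a 0 (t - 1) + a 0 (4 - t)) ^ m) \<in> C1"
| c1_add: "f \<in> C1 \<Longrightarrow> g \<in> C1 \<Longrightarrow> (\<lambda>t. f t + g t) \<in> C1"
| c1_mult: "f \<in> C1 \<Longrightarrow> g \<in> C1 \<Longrightarrow> (\<lambda>t. f t * g t) \<in> C1"

lemma den_pos: "a 0 (t - 1) + a 0 (4 - t) > 0"
proof (cases "t > 1")
  case True then show ?thesis using a_pos[of "t-1" 0] a_nonneg[of 0 "4-t"] by linarith
next
  case False then show ?thesis using a_pos[of "4-t" 0] a_nonneg[of 0 "t-1"] by linarith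
qed

lemma a1_deriv: "((\<lambda>t. a k (t - 1)) has_real_derivative (a (k+2) (t-1) + (- real k) * a (k+1) (t-1))) (at t)"
proof -
  have "((\<lambda>t. a k (t - 1)) has_real_derivative (a (k+2) (t-1) - real k * a (k+1) (t-1)) * 1) (at t)"
    by (rule DERIV_chain2[OF a_deriv]) (auto intro!: derivative_eq_intros)
  then show ?thesis by simp
qed

lemma a2_deriv: "((\<lambda>t. a k (4 - t)) has_real_derivative (-1) * (a (k+2) (4-t) + (- real k) * a (k+1) (4-t))) (at t)"
proof -
  have "((\<lambda>t. a k (4 - t)) has_real_derivative (a (k+2) (4-t) - real k * a (k+1) (4-t)) * (-1)) (at t)"
    by (rule DERIV_chain2[OF a_deriv]) (auto intro!: derivative_eq_intros)
  then show ?thesis by simp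
qed

lemma inv_pow_eq: "(G::real) \<noteq> 0 \<Longrightarrow> real m * ((- (D * inverse (G ^ Suc (Suc 0)))) * inverse G ^ (m - Suc 0))
       = (- real m) * (inverse G ^ Suc m * D)"
  by (cases m) (auto simp: power_inverse field_simps)

lemma C1_deriv: "f \<in> C1 \<Longrightarrow> \<exists>f'\<in>C1. \<forall>t. (f has_real_derivative f' t) (at t)"
proof (induction rule: C1.induct)
  case (c1_const c)
  show ?case by (rule bexI[of _ "\<lambda>t. 0"]) (auto intro: C1.intros)
next
  case c1_id
  show ?case by (rule bexI[of _ "\<lambda>t. 1"]) (auto intro: C1.intros)
next
  case (c1_a1 k)
  show ?case apply (rule bexI[of _ "\<lambda>t. a (k+2) (t-1) + (- real k) * a (k+1) (t-1)"]) apply (rule allI, rule a1_deriv) by (intro C1.intros)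
next
  case (c1_a2 k)
  show ?case apply (rule bexI[of _ "\<lambda>t. (-1) * (a (k+2) (4-t) + (- real k) * a (k+1) (4-t))"]) apply (rule allI, rule a2_deriv) by (intro C1.intros)
next
  case (c1_inv m)
  define g where "g t = a 0 (t - 1) + a 0 (4 - t)" for t
  have d: "((\<lambda>t. inverse (a 0 (t - 1) + a 0 (4 - t)) ^ m) has_real_derivative
     (- real m) * (inverse (a 0 (t - 1) + a 0 (4 - t)) ^ Suc m * (a 2 (t-1) + (-1) * a 2 (4-t)))) (at t)" for t
  proof -
    have hg: "(g has_real_derivative (a 2 (t-1) + (-1) * a 2 (4-t))) (at t)"
      unfolding g_def using DERIV_add[OF a1_deriv[of 0 t] a2_deriv[of 0 t]] by (simp add: numeral_2_eq_2)
    have gne: "g t \<noteq> 0" using den_pos[of t] by (simp add: g_def)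
    have "((\<lambda>t. inverse (g t) ^ m) has_real_derivative
       real m * ((- ((a 2 (t-1) + (-1) * a 2 (4-t)) * inverse (g t ^ Suc (Suc 0)))) * inverse (g t) ^ (m - Suc 0))) (at t)"
      by (rule DERIV_power[OF DERIV_inverse_fun[OF hg gne]])
    moreover have "real m * ((- ((a 2 (t-1) + (-1) * a 2 (4-t)) * inverse (g t ^ Suc (Suc 0)))) * inverse (g t) ^ (m - Suc 0))
       = (- real m) * (inverse (g t) ^ Suc m * (a 2 (t-1) + (-1) * a 2 (4-t)))"
      using inv_pow_eq[OF gne] .
    ultimately have "((\<lambda>t. inverse (g t) ^ m) has_real_derivative
      (- real m) * (inverse (g t) ^ Suc m * (a 2 (t-1) + (-1) * a 2 (4-t)))) (at t)" by metis
    then show ?thesis unfolding g_def .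
  qed
  show ?case apply (rule bexI[of _ "\<lambda>t. (- real m) * (inverse (a 0 (t - 1) + a 0 (4 - t)) ^ Suc m * (a 2 (t-1) + (-1) * a 2 (4-t)))"]) apply (rule allI, rule d) by (intro C1.intros)
next
  case (c1_add f g)
  then obtain f' g' where "f' \<in> C1" "g' \<in> C1" "\<forall>t. (f has_real_derivative f' t) (at t)"
     "\<forall>t. (g has_real_derivative g' t) (at t)" by blast
  then show ?case by (intro bexI[of _ "\<lambda>t. f' t + g' t"]) (auto intro: C1.intros DERIV_add)
next
  case (c1_mult f g)
  then obtain f' g' where "f' \<in> C1" "g' \<in> C1" "\<forall>t. (f has_real_derivative f' t) (at t)"
     "\<forall>t. (g has_real_derivative g' t) (at t)" by blast
  with c1_mult.hyps show ?case by (intro bexI[of _ "\<lambda>t. f' t * g t + g' t * f t"]) (auto intro: C1.intros DERIV_mult)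
qed

inductive_set CN :: "('a::euclidean_space \<Rightarrow> real) set" where
  cn_const: "(\<lambda>x. c) \<in> CN"
| cn_lin: "(\<lambda>x. inner x v) \<in> CN"
| cn_comp: "\<phi> \<in> C1 \<Longrightarrow> (\<lambda>x. \<phi> (inner x x)) \<in> CN"
| cn_add: "f \<in> CN \<Longrightarrow> g \<in> CN \<Longrightarrow> (\<lambda>x. f x + g x) \<in> CN"
| cn_mult: "f \<in> CN \<Longrightarrow> g \<in> CN \<Longrightarrow> (\<lambda>x. f x * g x) \<in> CN"

lemma comp_has_deriv:
  assumes "(\<phi> has_real_derivative D) (at (inner x x))"
  shows "((\<lambda>x::'a::euclidean_space. \<phi> (inner x x)) has_derivative (\<lambda>w. D * (2 * inner x w))) (at x)"
proof -
  have "((\<lambda>x::'a. inner x x) has_derivative (\<lambda>h. inner x h + inner h x)) (at x)"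
    by (rule has_derivative_inner[OF has_derivative_ident has_derivative_ident])
  from DERIV_compose_FDERIV[OF assms this]
  have "((\<lambda>x::'a. \<phi> (inner x x)) has_derivative (\<lambda>h. (inner x h + inner h x) * D)) (at x)" .
  moreover have "(\<lambda>h. (inner x h + inner h x) * D) = (\<lambda>w. D * (2 * inner x w))"
    by (auto simp: inner_commute algebra_simps)
  ultimately show ?thesis by simp
qed

lemma CN_deriv: "g \<in> CN \<Longrightarrow> \<exists>D. (\<forall>x. (g has_derivative D x) (at x)) \<and> (\<forall>v. (\<lambda>x. D x v) \<in> CN)"
proof (induction rule: CN.induct)
  case (cn_const c)
  show ?case by (rule exI[of _ "\<lambda>x w. 0"]) (auto intro: CN.intros)
next
  case (cn_lin v)
  show ?case by (rule exI[of _ "\<lambda>x w. inner w v"]) (auto intro!: CN.intros derivative_eq_intros)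
next
  case (cn_comp \<phi>)
  then obtain \<phi>' where p: "\<phi>' \<in> C1" "\<forall>t. (\<phi> has_real_derivative \<phi>' t) (at t)" using C1_deriv by blast
  show ?case
    apply (rule exI[of _ "\<lambda>x w. \<phi>' (inner x x) * (2 * inner x w)"])
    using p by (auto intro!: CN.intros comp_has_deriv)
next
  case (cn_add f g)
  then obtain D1 D2 where "\<forall>x. (f has_derivative D1 x) (at x)" "\<forall>v. (\<lambda>x. D1 x v) \<in> CN"
     "\<forall>x. (g has_derivative D2 x) (at x)" "\<forall>v. (\<lambda>x. D2 x v) \<in> CN" by blast
  then show ?case by (intro exI[of _ "\<lambda>x w. D1 x w + D2 x w"]) (auto intro: CN.intros has_derivative_add)
next
  case (cn_mult f g)
  then obtain D1 D2 where d: "\<forall>x. (f has_derivative D1 x) (at x)" "\<forall>v. (\<lambda>x. D1 x v) \<in> CN"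
     "\<forall>x. (g has_derivative D2 x) (at x)" "\<forall>v. (\<lambda>x. D2 x v) \<in> CN" by blast
  have "(\<lambda>x. f x * D2 x v + D1 x v * g x) \<in> CN" for v
    using CN.cn_add[OF CN.cn_mult[OF cn_mult.hyps(1) d(4)[rule_format]] CN.cn_mult[OF d(2)[rule_format] cn_mult.hyps(2)]] .
  with d show ?case
    by (intro exI[of _ "\<lambda>x w. f x * D2 x w + D1 x w * g x"]) (auto intro: has_derivative_mult)
qed

lemma CN_pderiv: "g \<in> CN \<Longrightarrow> pderiv_dir v g \<in> CN"
proof -
  assume "g \<in> CN"
  then obtain D where D: "\<forall>x. (g has_derivative D x) (at x)" "\<forall>v. (\<lambda>x. D x v) \<in> CN"
    using CN_deriv by blast
  have "D x = frechet_derivative g (at x)" for x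
    using D(1) frechet_derivative_at by blast
  then have "pderiv_dir v g = (\<lambda>x. D x v)"
    by (auto simp: pderiv_dir_def fun_eq_iff)
  then show ?thesis using D(2) by simp
qed

lemma CN_differentiable: "g \<in> CN \<Longrightarrow> g differentiable_on UNIV"
proof -
  assume "g \<in> CN"
  then obtain D where D: "\<forall>x. (g has_derivative D x) (at x)"
    using CN_deriv by blast
  then show ?thesis
    by (auto simp: differentiable_on_def differentiable_def)
qed

lemma CN_smooth: "g \<in> CN \<Longrightarrow> smooth_fun g"
proof -
  assume g: "g \<in> CN"
  have "diter vs g \<in> CN" for vs
    by (induction vs) (auto simp: g CN_pderiv)
  then show ?thesis by (auto simp: smooth_fun_def CN_differentiable)
qed

definition psi :: "real \<Rightarrow> real" where
  "psi = (\<lambda>t. t * (1 + (-1) * (a 0 (t - 1) * inverse (a 0 (t - 1) + a 0 (4 - t)) ^ 1))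
             + 2 * (a 0 (t - 1) * inverse (a 0 (t - 1) + a 0 (4 - t)) ^ 1))"

definition sfun :: "real \<Rightarrow> real" where
  "sfun t = a 0 (t - 1) / (a 0 (t - 1) + a 0 (4 - t))"

lemma psi_C1: "psi \<in> C1"
  unfolding psi_def by (intro C1.intros)

lemma psi_alt: "psi t = t * (1 - sfun t) + 2 * sfun t"
  by (simp add: psi_def sfun_def divide_inverse)

lemma sfun_range: "0 \<le> sfun t" "sfun t \<le> 1"
  using a_nonneg[of 0 "t-1"] a_nonneg[of 0 "4-t"] den_pos[of t]
  by (auto simp: sfun_def divide_simps)

lemma sfun_low: "t \<le> 1 \<Longrightarrow> sfun t = 0"
  by (simp add: sfun_def a_def)

lemma sfun_high: "t \<ge> 4 \<Longrightarrow> sfun t = 1"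
  using a_pos[of "t-1" 0] by (simp add: sfun_def a_def)

lemma psi_low: "t \<le> 1 \<Longrightarrow> psi t = t"
  by (simp add: psi_alt sfun_low)

lemma psi_high: "t \<ge> 4 \<Longrightarrow> psi t = 2"
  by (simp add: psi_alt sfun_high)

lemma psi_ge: assumes "t \<ge> 0" shows "min t 1 \<le> psi t"
proof (cases "t \<le> 2")
  case True
  have "psi t - t = sfun t * (2 - t)" by (simp add: psi_alt algebra_simps)
  also have "\<dots> \<ge> 0" using True sfun_range[of t] by simp
  finally show ?thesis by linarith
next
  case False
  have "psi t - 2 = (1 - sfun t) * (t - 2)" by (simp add: psi_alt algebra_simps)
  also have "\<dots> \<ge> 0" using False sfun_range[of t] by simp
  finally show ?thesis by linarith
qed

lemma C1_cont: "g \<in> C1 \<Longrightarrow> continuous_on S g"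
proof -
  assume "g \<in> C1"
  then obtain g' where "\<forall>t. (g has_real_derivative g' t) (at t)" using C1_deriv by blast
  then show ?thesis by (intro continuous_at_imp_continuous_on) (auto intro: DERIV_isCont)
qed

lemma C1_bound: "g \<in> C1 \<Longrightarrow> \<exists>M\<ge>0. \<forall>t\<in>{0..4}. \<bar>g t\<bar> \<le> M"
proof -
  assume "g \<in> C1"
  then have "compact (g ` {0..4})" by (intro compact_continuous_image C1_cont) auto
  then obtain M where "\<forall>y\<in>g ` {0..4}. norm y \<le> M" using compact_imp_bounded bounded_iff by metis
  then have "\<forall>t\<in>{0..4}. \<bar>g t\<bar> \<le> max M 0"
  proof (intro ballI)
    fix t :: real assume "t \<in> {0..4}" "\<forall>y\<in>g ` {0..4}. norm y \<le> M"
    then have "norm (g t) \<le> M" by blast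
    then show "\<bar>g t\<bar> \<le> max M 0" by simp
  qed
  then show ?thesis by (intro exI[of _ "max M 0"]) auto
qed

lemma pd1:
  assumes "\<forall>t. (\<phi> has_real_derivative \<phi>' t) (at t)"
  shows "pderiv_dir c (\<lambda>x::'a::euclidean_space. \<phi> (inner x x)) = (\<lambda>x. \<phi>' (inner x x) * (2 * inner x c))"
proof
  fix x :: 'a
  have D: "((\<lambda>x::'a. \<phi> (inner x x)) has_derivative (\<lambda>w. \<phi>' (inner x x) * (2 * inner x w))) (at x)"
    using assms by (intro comp_has_deriv) auto
  show "pderiv_dir c (\<lambda>x::'a. \<phi> (inner x x)) x = \<phi>' (inner x x) * (2 * inner x c)"
    unfolding pderiv_dir_def frechet_derivative_at[OF D, symmetric] by simp
qed

lemma pd2: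
  assumes "\<forall>t. (\<phi> has_real_derivative \<phi>' t) (at t)"
  shows "pderiv_dir b (\<lambda>x::'a::euclidean_space. \<phi> (inner x x) * (2 * inner x c)) x
     = \<phi> (inner x x) * (2 * inner b c) + \<phi>' (inner x x) * (2 * inner x b) * (2 * inner x c)"
proof -
  have "((\<lambda>x::'a. \<phi> (inner x x)) has_derivative (\<lambda>w. \<phi>' (inner x x) * (2 * inner x w))) (at x)"
    using assms by (intro comp_has_deriv) auto
  moreover have "((\<lambda>x::'a. 2 * inner x c) has_derivative (\<lambda>w. 2 * inner w c)) (at x)"
    by (auto intro!: derivative_eq_intros)
  ultimately have D: "((\<lambda>x::'a. \<phi> (inner x x) * (2 * inner x c)) has_derivative
     (\<lambda>w. \<phi> (inner x x) * (2 * inner w c) + \<phi>' (inner x x) * (2 * inner x w) * (2 * inner x c))) (at x)"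
    by (rule has_derivative_mult)
  show ?thesis
    unfolding pderiv_dir_def frechet_derivative_at[OF D, symmetric] by (simp add: inner_commute)
qed

lemma sumsq_le:
  assumes "finite B" "\<forall>b\<in>B. \<bar>e b\<bar> \<le> (K::real)"
  shows "(\<Sum>b\<in>B. (e b)\<^sup>2) \<le> real (card B) * K\<^sup>2"
proof -
  have "(\<Sum>b\<in>B. (e b)\<^sup>2) \<le> (\<Sum>b\<in>B. K\<^sup>2)"
  proof (rule sum_mono)
    fix b assume "b \<in> B"
    then have "\<bar>e b\<bar> \<le> K" using assms by auto
    then have "\<bar>e b\<bar>\<^sup>2 \<le> K\<^sup>2" by (intro power_mono) auto
    then show "(e b)\<^sup>2 \<le> K\<^sup>2" by simp
  qed
  then show ?thesis by simp
qed

lemma sq1: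
  assumes "finite B" "\<forall>b\<in>B. \<bar>e b\<bar> \<le> (K::real)"
  shows "sqrt (\<Sum>b\<in>B. (e b)\<^sup>2) \<le> real (card B) * K"
proof (cases "B = {}")
  case True then show ?thesis by simp
next
  case False
  then obtain b where "b \<in> B" by auto
  then have K: "K \<ge> 0" using assms(2) by force
  have c: "real (card B) \<ge> 1" using False assms(1) by (simp add: Suc_leI card_gt_0_iff)
  have "(\<Sum>b\<in>B. (e b)\<^sup>2) \<le> real (card B) * K\<^sup>2" by (rule sumsq_le[OF assms])
  also have "\<dots> \<le> (real (card B) * K)\<^sup>2"
  proof -
    have "K \<le> real (card B) * K" using mult_right_mono[OF c K] by simp
    then have "K * K \<le> K * (real (card B) * K)" using K by (rule mult_left_mono)
    then have "real (card B) * (K * K) \<le> real (card B) * (K * (real (card B) * K))" by (rule mult_left_mono) (use c in simp)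
    then show ?thesis by (simp add: power2_eq_square algebra_simps)
  qed
  finally show ?thesis using c K by (intro real_le_lsqrt) auto
qed

lemma sq2:
  assumes "finite B" "\<forall>b\<in>B. \<forall>c\<in>B. \<bar>e b c\<bar> \<le> (K::real)"
  shows "sqrt (\<Sum>b\<in>B. \<Sum>c\<in>B. (e b c)\<^sup>2) \<le> real (card B) * real (card B) * K"
proof (cases "B = {}")
  case True then show ?thesis by simp
next
  case False
  then obtain b where "b \<in> B" by auto
  then have K: "K \<ge> 0" using assms(2) by force
  have c: "real (card B) \<ge> 1" using False assms(1) by (simp add: Suc_leI card_gt_0_iff)
  have "(\<Sum>b\<in>B. \<Sum>c\<in>B. (e b c)\<^sup>2) \<le> (\<Sum>b\<in>B. real (card B) * K\<^sup>2)"
    using assms by (intro sum_mono sumsq_le) auto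
  also have "\<dots> = real (card B) * real (card B) * K\<^sup>2" by simp
  also have "\<dots> \<le> (real (card B) * real (card B) * K)\<^sup>2"
  proof -
    have "real (card B) * real (card B) \<le> (real (card B) * real (card B))\<^sup>2"
    proof -
      have c2: "1 \<le> real (card B) * real (card B)" using mult_mono[OF c c] by simp
      have "1 * (real (card B) * real (card B)) \<le> (real (card B) * real (card B)) * (real (card B) * real (card B))"
        by (rule mult_right_mono[OF c2]) simp
      then show ?thesis by (simp add: power2_eq_square)
    qed
    then show ?thesis using K by (simp add: power_mult_distrib mult_right_mono)
  qed
  finally show ?thesis using c K by (intro real_le_lsqrt) auto
qed

theorem lemma5p2:
  shows "\<exists>f :: 'a::euclidean_space \<Rightarrow> real.
     smooth_fun f \<and>
     (\<forall>x. 0 \<le> f x) \<and>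
     (\<forall>x. norm x \<le> 1 \<longrightarrow> f x = (norm x)\<^sup>2) \<and>
     (\<forall>x. norm x \<ge> 2 \<longrightarrow> f x = 2) \<and>
     (\<exists>C1>0. \<forall>x. grad_norm f x + hess_norm f x \<le> C1 * indicator {z. norm z \<le> 2} x) \<and>
     (\<forall>C2>0. \<exists>C3>0. \<forall>\<delta>>0. \<forall>r\<in>{0..1}. \<forall>x y.
        norm y \<le> C2 * min (norm x + \<delta>) 1 \<longrightarrow>
          norm y * grad_norm f (x + r *\<^sub>R y) \<le> C3 * (f x + \<delta>) \<and>
          (norm y)\<^sup>2 * hess_norm f (x + r *\<^sub>R y) \<le> C3 * (f x + \<delta>\<^sup>2))"
proof -
  define f :: "'a \<Rightarrow> real" where "f = (\<lambda>x. psi (inner x x))"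
  obtain psi1 where p1: "psi1 \<in> C1" "\<forall>t. (psi has_real_derivative psi1 t) (at t)"
    using C1_deriv[OF psi_C1] by blast
  obtain psi2 where p2: "psi2 \<in> C1" "\<forall>t. (psi1 has_real_derivative psi2 t) (at t)"
    using C1_deriv[OF p1(1)] by blast
  obtain M1 where M1: "M1 \<ge> 0" "\<forall>t\<in>{0..4}. \<bar>psi1 t\<bar> \<le> M1" using C1_bound[OF p1(1)] by blast
  obtain M2 where M2: "M2 \<ge> 0" "\<forall>t\<in>{0..4}. \<bar>psi2 t\<bar> \<le> M2" using C1_bound[OF p2(1)] by blast
  have psi1_0: "psi1 t = 0" if t: "t > 4" for t
  proof -
    have "((\<lambda>_. 2) has_real_derivative 0) (at t)" by simp
    then have "(psi has_real_derivative 0) (at t)"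
      by (rule has_field_derivative_transform_within_open[where S="{4<..}"]) (use t in \<open>auto simp: psi_high\<close>)
    with p1(2) show ?thesis using DERIV_unique by blast
  qed
  have psi2_0: "psi2 t = 0" if t: "t > 4" for t
  proof -
    have "((\<lambda>_. 0) has_real_derivative 0) (at t)" by simp
    then have "(psi1 has_real_derivative 0) (at t)"
      by (rule has_field_derivative_transform_within_open[where S="{4<..}"]) (use t in \<open>auto simp: psi1_0\<close>)
    with p2(2) show ?thesis using DERIV_unique by blast
  qed
  have smooth: "smooth_fun f" unfolding f_def by (intro CN_smooth CN.cn_comp psi_C1)
  have nx: "inner x x = (norm x)\<^sup>2" for x :: 'a by (simp add: power2_norm_eq_inner)
  have fge: "min ((norm x)\<^sup>2) 1 \<le> f x" for x
    unfolding f_def nx by (rule psi_ge) simp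
  have nonneg: "\<forall>x. 0 \<le> f x"
  proof
    fix x :: 'a have "0 \<le> min ((norm x)\<^sup>2) (1::real)" by simp
    then show "0 \<le> f x" using fge[of x] by linarith
  qed
  have inside: "\<forall>x. norm x \<le> 1 \<longrightarrow> f x = (norm x)\<^sup>2"
  proof (intro allI impI)
    fix x :: 'a assume "norm x \<le> 1"
    then have "(norm x)\<^sup>2 \<le> 1" by (simp add: power_le_one)
    then show "f x = (norm x)\<^sup>2" unfolding f_def nx by (rule psi_low)
  qed
  have outside: "\<forall>x. norm x \<ge> 2 \<longrightarrow> f x = 2"
  proof (intro allI impI)
    fix x :: 'a assume "norm x \<ge> 2"
    then have "(norm x)\<^sup>2 \<ge> 2\<^sup>2" by (intro power_mono) auto
    then show "f x = 2" unfolding f_def nx by (intro psi_high) simp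
  qed
  have gradf: "grad_norm f z = sqrt (\<Sum>b\<in>Basis. (psi1 (inner z z) * (2 * inner z b))\<^sup>2)" for z
    unfolding grad_norm_def f_def pd1[OF p1(2)] ..
  have hessf: "hess_norm f z = sqrt (\<Sum>b\<in>Basis. \<Sum>c\<in>Basis.
      (psi1 (inner z z) * (2 * inner b c) + psi2 (inner z z) * (2 * inner z b) * (2 * inner z c))\<^sup>2)" for z
    unfolding hess_norm_def f_def pd1[OF p1(2)] pd2[OF p2(2)] ..
  define ind where "ind z = (indicator {z. norm z \<le> 2} z :: real)" for z :: 'a
  have gcomp: "\<bar>psi1 (inner z z) * (2 * inner z b)\<bar> \<le> 2 * M1 * min (norm z) 2 * ind z"
    if b: "b \<in> Basis" for z b
  proof (cases "norm z \<le> 2")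
    case True
    have "(norm z)\<^sup>2 \<le> 2\<^sup>2" using True by (intro power_mono) auto
    then have "\<bar>psi1 (inner z z)\<bar> \<le> M1" using M1(2) by (simp add: nx)
    moreover have "\<bar>inner z b\<bar> \<le> norm z" using b by (rule Basis_le_norm)
    ultimately have "\<bar>psi1 (inner z z)\<bar> * \<bar>inner z b\<bar> \<le> M1 * norm z"
      by (intro mult_mono) auto
    then show ?thesis using True by (simp add: ind_def abs_mult)
  next
    case False
    then have "(norm z)\<^sup>2 > 2\<^sup>2" by (intro power_strict_mono) auto
    then have "psi1 (inner z z) = 0" by (intro psi1_0) (simp add: nx)
    then show ?thesis using False by (simp add: ind_def)
  qed
  have hcomp: "\<bar>psi1 (inner z z) * (2 * inner b c) + psi2 (inner z z) * (2 * inner z b) * (2 * inner z c)\<bar>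
      \<le> (2 * M1 + 16 * M2) * ind z"
    if b: "b \<in> Basis" and c: "c \<in> Basis" for z b c
  proof (cases "norm z \<le> 2")
    case True
    have "(norm z)\<^sup>2 \<le> 2\<^sup>2" using True by (intro power_mono) auto
    then have p1b: "\<bar>psi1 (inner z z)\<bar> \<le> M1" and p2b: "\<bar>psi2 (inner z z)\<bar> \<le> M2"
      using M1(2) M2(2) by (simp_all add: nx)
    have bc: "\<bar>inner b c\<bar> \<le> 1" using b c by (simp add: inner_Basis)
    have zb: "\<bar>inner z b\<bar> \<le> 2" using Basis_le_norm[OF b, of z] True by linarith
    have zc: "\<bar>inner z c\<bar> \<le> 2" using Basis_le_norm[OF c, of z] True by linarith
    have t1: "\<bar>psi1 (inner z z) * (2 * inner b c)\<bar> \<le> 2 * M1"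
    proof -
      have "\<bar>psi1 (inner z z)\<bar> * \<bar>inner b c\<bar> \<le> M1 * 1" using p1b bc by (intro mult_mono) auto
      then show ?thesis by (simp add: abs_mult)
    qed
    have t2: "\<bar>psi2 (inner z z) * (2 * inner z b) * (2 * inner z c)\<bar> \<le> 16 * M2"
    proof -
      have "\<bar>inner z b\<bar> * \<bar>inner z c\<bar> \<le> 2 * 2" using zb zc by (intro mult_mono) auto
      then have "\<bar>psi2 (inner z z)\<bar> * (\<bar>inner z b\<bar> * \<bar>inner z c\<bar>) \<le> M2 * (2 * 2)"
        by (rule mult_mono[OF p2b]) (use M2(1) in auto)
      then show ?thesis by (simp add: abs_mult algebra_simps)
    qed
    show ?thesis using t1 t2 True abs_triangle_ineq[of "psi1 (inner z z) * (2 * inner b c)"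
        "psi2 (inner z z) * (2 * inner z b) * (2 * inner z c)"] by (simp add: ind_def)
  next
    case False
    then have "(norm z)\<^sup>2 > 2\<^sup>2" by (intro power_strict_mono) auto
    then have "psi1 (inner z z) = 0" "psi2 (inner z z) = 0" by (auto intro!: psi1_0 psi2_0 simp: nx)
    then show ?thesis using False by (simp add: ind_def)
  qed
  define n where "n = real DIM('a)"
  have n1: "n \<ge> 1" unfolding n_def by simp
  define G where "G = n * (2 * M1)"
  define H where "H = n * n * (2 * M1 + 16 * M2)"
  have G0: "G \<ge> 0" and H0: "H \<ge> 0" using n1 M1 M2 by (simp_all add: G_def H_def)
  have ind01: "0 \<le> ind z" "ind z \<le> 1" for z by (auto simp: ind_def)
  have gb: "grad_norm f z \<le> n * (2 * M1 * min (norm z) 2 * ind z)" for z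
    unfolding gradf n_def by (rule sq1) (simp, use gcomp in blast)
  have hb: "hess_norm f z \<le> n * n * ((2 * M1 + 16 * M2) * ind z)" for z
    unfolding hessf n_def by (rule sq2) (simp, use hcomp in blast)
  have gpos: "grad_norm f z \<ge> 0" for z by (simp add: grad_norm_def sum_nonneg)
  have hpos: "hess_norm f z \<ge> 0" for z by (simp add: hess_norm_def sum_nonneg)
  have gz: "grad_norm f z \<le> G * min (norm z) 2" for z
  proof -
    have "2 * M1 * min (norm z) 2 * ind z \<le> 2 * M1 * min (norm z) 2 * 1"
      using ind01[of z] M1(1) by (intro mult_left_mono) auto
    then have "n * (2 * M1 * min (norm z) 2 * ind z) \<le> n * (2 * M1 * min (norm z) 2)"
      using n1 by (intro mult_left_mono) auto
    then show ?thesis using gb[of z] by (simp add: G_def algebra_simps)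
  qed
  have hz: "hess_norm f z \<le> H" for z
  proof -
    have "(2 * M1 + 16 * M2) * ind z \<le> (2 * M1 + 16 * M2) * 1"
      using ind01[of z] M1(1) M2(1) by (intro mult_left_mono) auto
    then have "n * n * ((2 * M1 + 16 * M2) * ind z) \<le> n * n * (2 * M1 + 16 * M2)"
      using n1 by (intro mult_left_mono) auto
    then show ?thesis using hb[of z] by (simp add: H_def)
  qed
  have Cpart: "\<exists>C1>0. \<forall>x. grad_norm f x + hess_norm f x \<le> C1 * indicator {z. norm z \<le> 2} x"
  proof (intro exI[of _ "2 * G + H + 1"] conjI allI)
    show "2 * G + H + 1 > 0" using G0 H0 by simp
  next
    fix x :: 'a
    have "2 * M1 * min (norm x) 2 * ind x \<le> 2 * M1 * 2 * ind x"
      using ind01[of x] M1(1) by (intro mult_right_mono mult_left_mono) auto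
    then have "n * (2 * M1 * min (norm x) 2 * ind x) \<le> n * (2 * M1 * 2 * ind x)"
      using n1 by (intro mult_left_mono) auto
    then have "grad_norm f x + hess_norm f x \<le> (2 * G + H) * ind x"
      using gb[of x] hb[of x] by (simp add: G_def H_def algebra_simps)
    also have "\<dots> \<le> (2 * G + H + 1) * ind x" using ind01[of x] by (intro mult_right_mono) auto
    finally show "grad_norm f x + hess_norm f x \<le> (2 * G + H + 1) * indicator {z. norm z \<le> 2} x"
      by (simp add: ind_def)
  qed
  have C2part: "\<forall>C2>0. \<exists>C3>0. \<forall>\<delta>>0. \<forall>r\<in>{0..1}. \<forall>x y.
        norm y \<le> C2 * min (norm x + \<delta>) 1 \<longrightarrow>
          norm y * grad_norm f (x + r *\<^sub>R y) \<le> C3 * (f x + \<delta>) \<and>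
          (norm y)\<^sup>2 * hess_norm f (x + r *\<^sub>R y) \<le> C3 * (f x + \<delta>\<^sup>2)"
  proof (intro allI impI)
    fix C2 :: real assume C2: "C2 > 0"
    define C3 where "C3 = 8 * G * C2 + 2 * G * C2 * (1 + C2) + 6 * C2\<^sup>2 * H + 1"
    have t1: "0 \<le> 8 * G * C2" "0 \<le> 2 * G * C2 * (1 + C2)" "0 \<le> 6 * C2\<^sup>2 * H"
      "2 * C2\<^sup>2 * H \<le> 6 * C2\<^sup>2 * H" "4 * C2\<^sup>2 * H \<le> 6 * C2\<^sup>2 * H"
      using G0 H0 C2 by (auto intro!: mult_right_mono)
    have C3pos: "C3 > 0" unfolding C3_def using t1 by linarith
    have main: "norm y * grad_norm f (x + r *\<^sub>R y) \<le> C3 * (f x + \<delta>) \<and>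
          (norm y)\<^sup>2 * hess_norm f (x + r *\<^sub>R y) \<le> C3 * (f x + \<delta>\<^sup>2)"
      if d: "\<delta> > 0" and r: "r \<in> {0..1}" and hy: "norm y \<le> C2 * min (norm x + \<delta>) 1" for \<delta> r x y
    proof -
      define z where "z = x + r *\<^sub>R y"
      have "norm (r *\<^sub>R y) \<le> norm y" using r mult_right_mono[of r 1 "norm y"] by auto
      then have nz: "norm z \<le> norm x + norm y" unfolding z_def using norm_triangle_ineq[of x "r *\<^sub>R y"] by linarith
      have F0: "f x \<ge> 0" using nonneg by blast
      have ny0: "norm y \<ge> 0" by simp
      have gz': "grad_norm f z \<le> G * norm z" "grad_norm f z \<le> G * 2"
        using gz[of z] mult_left_mono[OF min.cobounded1[of "norm z" 2] G0]
          mult_left_mono[OF min.cobounded2[of "norm z" 2] G0] by linarith+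
      have C3a: "2 * G * C2 * (1 + C2) \<le> C3" "2 * C2\<^sup>2 * H \<le> C3" "8 * G * C2 \<le> C3" "4 * C2\<^sup>2 * H \<le> C3"
        unfolding C3_def using t1 by linarith+
      show ?thesis
      proof (cases "norm x + \<delta> \<le> 1")
        case True
        define u where "u = norm x + \<delta>"
        have u0: "u \<ge> 0" using d by (simp add: u_def)
        have yu: "norm y \<le> C2 * u" using hy True by (simp add: u_def)
        have x1: "norm x \<le> 1" and d1: "\<delta> \<le> 1" using True d norm_ge_zero[of x] by linarith+
        have "(norm x)\<^sup>2 \<le> 1" using x1 by (simp add: power_le_one)
        then have Fx: "(norm x)\<^sup>2 \<le> f x" using fge[of x] by simp
        have dd: "\<delta>\<^sup>2 \<le> \<delta>" using d d1 by (simp add: power2_eq_square mult_left_le)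
        have e1: "u\<^sup>2 = (norm x)\<^sup>2 + \<delta>\<^sup>2 + 2 * (norm x * \<delta>)" by (simp add: u_def power2_sum)
        have e2: "0 \<le> (norm x)\<^sup>2 + \<delta>\<^sup>2 - 2 * (norm x * \<delta>)"
          using power2_diff[of "norm x" \<delta>] zero_le_power2[of "norm x - \<delta>"] by linarith
        have "u\<^sup>2 \<le> 2 * ((norm x)\<^sup>2 + \<delta>\<^sup>2)" unfolding e1 using e2 by simp
        then have u2: "u\<^sup>2 \<le> 2 * (f x + \<delta>\<^sup>2)" using Fx by argo
        have xu: "norm x \<le> u" using d by (simp add: u_def)
        have "(1 + C2) * u = u + C2 * u" by (simp add: algebra_simps)
        then have zu: "norm z \<le> (1 + C2) * u" using nz yu xu by linarith
        have gzu: "grad_norm f z \<le> G * ((1 + C2) * u)"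
          using gz'(1) mult_left_mono[OF zu G0] by linarith
        have "norm y * grad_norm f z \<le> (C2 * u) * (G * ((1 + C2) * u))"
          by (rule mult_mono[OF yu gzu]) (use C2 u0 gpos in auto)
        also have "\<dots> = (G * C2 * (1 + C2)) * u\<^sup>2" by (simp add: power2_eq_square algebra_simps)
        also have "\<dots> \<le> (G * C2 * (1 + C2)) * (2 * (f x + \<delta>\<^sup>2))"
          by (rule mult_left_mono[OF u2]) (use G0 C2 in auto)
        also have "\<dots> \<le> (G * C2 * (1 + C2)) * (2 * (f x + \<delta>))"
          by (rule mult_left_mono) (use dd G0 C2 in auto)
        also have "\<dots> = (2 * G * C2 * (1 + C2)) * (f x + \<delta>)" by simp
        also have "\<dots> \<le> C3 * (f x + \<delta>)"
          by (rule mult_right_mono[OF C3a(1)]) (use F0 d in auto)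
        finally have g: "norm y * grad_norm f z \<le> C3 * (f x + \<delta>)" .
        have y2: "(norm y)\<^sup>2 \<le> (C2 * u)\<^sup>2" by (rule power_mono[OF yu ny0])
        have "(norm y)\<^sup>2 * hess_norm f z \<le> (C2 * u)\<^sup>2 * H"
          by (rule mult_mono[OF y2 hz]) (use hpos in auto)
        also have "\<dots> = (C2\<^sup>2 * H) * u\<^sup>2" by (simp add: power_mult_distrib)
        also have "\<dots> \<le> (C2\<^sup>2 * H) * (2 * (f x + \<delta>\<^sup>2))"
          by (rule mult_left_mono[OF u2]) (use H0 in auto)
        also have "\<dots> = (2 * C2\<^sup>2 * H) * (f x + \<delta>\<^sup>2)" by simp
        also have "\<dots> \<le> C3 * (f x + \<delta>\<^sup>2)"
          by (rule mult_right_mono[OF C3a(2)]) (use F0 in auto)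
        finally have h: "(norm y)\<^sup>2 * hess_norm f z \<le> C3 * (f x + \<delta>\<^sup>2)" .
        show ?thesis using g h by (simp add: z_def)
      next
        case False
        have y: "norm y \<le> C2" using hy False by simp
        have low: "1/4 \<le> f x + \<delta> \<and> 1/4 \<le> f x + \<delta>\<^sup>2"
        proof (cases "\<delta> \<ge> 1/2")
          case True
          have "(1/2)\<^sup>2 \<le> \<delta>\<^sup>2" by (rule power_mono[OF True]) simp
          then show ?thesis using True F0 by (simp add: power2_eq_square)
        next
          case False2: False
          then have "norm x \<ge> 1/2" using False by simp
          then have "(1/2)\<^sup>2 \<le> (norm x)\<^sup>2" by (rule power_mono) simp
          then have "1/4 \<le> f x" using fge[of x] by (simp add: power2_eq_square)
          moreover have "0 \<le> \<delta>\<^sup>2" by simp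
          ultimately show ?thesis using d by argo
        qed
        have "norm y * grad_norm f z \<le> C2 * (G * 2)"
          by (rule mult_mono[OF y gz'(2)]) (use C2 gpos in auto)
        also have "\<dots> = (8 * G * C2) * (1/4)" by simp
        also have "\<dots> \<le> (8 * G * C2) * (f x + \<delta>)"
          by (rule mult_left_mono) (use low G0 C2 in auto)
        also have "\<dots> \<le> C3 * (f x + \<delta>)"
          by (rule mult_right_mono[OF C3a(3)]) (use F0 d in auto)
        finally have g: "norm y * grad_norm f z \<le> C3 * (f x + \<delta>)" .
        have y2: "(norm y)\<^sup>2 \<le> C2\<^sup>2" by (rule power_mono[OF y ny0])
        have "(norm y)\<^sup>2 * hess_norm f z \<le> C2\<^sup>2 * H"
          by (rule mult_mono[OF y2 hz]) (use hpos in auto)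
        also have "\<dots> = (4 * C2\<^sup>2 * H) * (1/4)" by simp
        also have "\<dots> \<le> (4 * C2\<^sup>2 * H) * (f x + \<delta>\<^sup>2)"
          by (rule mult_left_mono) (use low H0 in auto)
        also have "\<dots> \<le> C3 * (f x + \<delta>\<^sup>2)"
          by (rule mult_right_mono[OF C3a(4)]) (use F0 in auto)
        finally have h: "(norm y)\<^sup>2 * hess_norm f z \<le> C3 * (f x + \<delta>\<^sup>2)" .
        show ?thesis using g h by (simp add: z_def)
      qed
    qed
    show "\<exists>C3>0. \<forall>\<delta>>0. \<forall>r\<in>{0..1}. \<forall>x y.
        norm y \<le> C2 * min (norm x + \<delta>) 1 \<longrightarrow>
          norm y * grad_norm f (x + r *\<^sub>R y) \<le> C3 * (f x + \<delta>) \<and>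
          (norm y)\<^sup>2 * hess_norm f (x + r *\<^sub>R y) \<le> C3 * (f x + \<delta>\<^sup>2)"
      using C3pos main by blast
  qed
  show ?thesis
    apply (rule exI[of _ f])
    using smooth nonneg inside outside Cpart C2part by blast
qed
end
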